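(* Let $G=(V,E)$ be a finite simple graph of order at least $3$ in which every connected component has order at least $3$, let $M\subset V$ be any set of (marked) vertices, and let $\mathcal{G}$ be an Abelian group with $|\mathcal{G}|\geq \Delta(G)+\mathrm{col}(G)-1$. Then there exists a labeling $f\colon E\to\mathcal{G}\setminus\{0\}$ such that $w_f(v)\neq 0$ for every $v\in M$ and $w_f(u)\neq w_f(v)$ for every edge $uv\in E$ with $u,v\notin M$.
   Context: $w_f(v)=\sum_{u\in N(v)} f(uv)$ (sum in $\mathcal{G}$) is the weighted degree of $v$. $\Delta(G)$ is the maximum degree of $G$. The coloring number $\mathrm{col}(G)$ is the least integer $k$ such that every subgraph of $G$ has minimum degree less than $k$ (equivalently, the vertices can be ordered so that each has at most $k-1$ neighbours preceding it). *)

theory Defs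
  imports Main
begin

definition simple_graph :: "'a set \<Rightarrow> 'a set set \<Rightarrow> bool" where
  "simple_graph V E \<longleftrightarrow> finite V \<and> (\<forall>e\<in>E. e \<subseteq> V \<and> card e = 2)"

definition adj :: "'a set set \<Rightarrow> 'a \<Rightarrow> 'a \<Rightarrow> bool" where
  "adj E u v \<longleftrightarrow> {u, v} \<in> E"

definition degree :: "'a set set \<Rightarrow> 'a \<Rightarrow> nat" where
  "degree E v = card {u. {u, v} \<in> E}"

definition max_degree :: "'a set \<Rightarrow> 'a set set \<Rightarrow> nat" where
  "max_degree V E = Max (degree E ` V)"

definition component :: "'a set \<Rightarrow> 'a set set \<Rightarrow> 'a \<Rightarrow> 'a set" where
  "component V E v = {u\<in>V. (v, u) \<in> {(x, y). x \<in> V \<and> y \<in> V \<and> adj E x y}\<^sup>*}"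

definition subgraph :: "'a set \<Rightarrow> 'a set set \<Rightarrow> 'a set \<Rightarrow> 'a set set \<Rightarrow> bool" where
  "subgraph V' E' V E \<longleftrightarrow> V' \<subseteq> V \<and> E' \<subseteq> E \<and> (\<forall>e\<in>E'. e \<subseteq> V')"

definition min_degree :: "'a set \<Rightarrow> 'a set set \<Rightarrow> nat" where
  "min_degree V' E' = Min (degree E' ` V')"

definition col :: "'a set \<Rightarrow> 'a set set \<Rightarrow> nat" where
  "col V E = (LEAST k. \<forall>V' E'. subgraph V' E' V E \<and> V' \<noteq> {} \<longrightarrow> min_degree V' E' < k)"

definition wdeg :: "'a set set \<Rightarrow> ('a set \<Rightarrow> 'g::comm_monoid_add) \<Rightarrow> 'a \<Rightarrow> 'g" where
  "wdeg E f v = (\<Sum>e\<in>{e\<in>E. v \<in> e}. f e)"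

end

theory Submission
  imports Defs
begin


definition nbr :: "'a set set \<Rightarrow> 'a \<Rightarrow> 'a set" where
  "nbr E v = {u. {u, v} \<in> E}"

definition good :: "'a set set \<Rightarrow> 'a set \<Rightarrow> ('a set \<Rightarrow> 'g::comm_monoid_add) \<Rightarrow> 'a set \<Rightarrow> bool" where
  "good E M f D \<longleftrightarrow> (\<forall>v\<in>D. v \<in> M \<longrightarrow> wdeg E f v \<noteq> 0) \<and>
     (\<forall>u v. u \<in> D \<and> v \<in> D \<and> {u, v} \<in> E \<and> u \<notin> M \<and> v \<notin> M \<longrightarrow> wdeg E f u \<noteq> wdeg E f v)"

definition base :: "'a set set \<Rightarrow> ('a set \<Rightarrow> 'g::comm_monoid_add) \<Rightarrow> 'a \<Rightarrow> 'a \<Rightarrow> 'g" where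
  "base E f u v = (\<Sum>z\<in>nbr E v - {u}. f {z, v})"

definition forb :: "'a set set \<Rightarrow> 'a set \<Rightarrow> ('a set \<Rightarrow> 'g::ab_group_add) \<Rightarrow> 'a set \<Rightarrow> 'a \<Rightarrow> 'a \<Rightarrow> 'g set" where
  "forb E M f D u v = (if v \<in> M then {- base E f u v}
     else (\<lambda>z. wdeg E f z - base E f u v) ` {z\<in>D. z \<in> nbr E v \<and> z \<notin> M})"

definition ltc :: "'g itself \<Rightarrow> nat \<Rightarrow> bool" where
  "ltc _ n \<longleftrightarrow> (\<not> finite (UNIV :: 'g set) \<or> n < card (UNIV :: 'g set))"

lemma ltc_mono: "m \<le> n \<Longrightarrow> ltc TYPE('g) n \<Longrightarrow> ltc TYPE('g) m"
  unfolding ltc_def by auto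

lemma ltc_avoid:
  assumes "finite (S :: 'g set)" "ltc TYPE('g) (card S)"
  shows "\<exists>a. a \<notin> S"
proof (cases "finite (UNIV :: 'g set)")
  case True
  with assms have "card S < card (UNIV :: 'g set)" unfolding ltc_def by auto
  then have "S \<noteq> UNIV" by auto
  then show ?thesis by auto
next
  case False
  then show ?thesis using assms(1) ex_new_if_finite by blast
qed

locale sg =
  fixes V :: "'a set" and E :: "'a set set"
  assumes sg: "simple_graph V E"
begin

lemma finV: "finite V" using sg unfolding simple_graph_def by auto

lemma edge_sub: "e \<in> E \<Longrightarrow> e \<subseteq> V" using sg unfolding simple_graph_def by auto

lemma edge_form: "e \<in> E \<Longrightarrow> \<exists>a b. e = {a, b} \<and> a \<noteq> b"
  using sg unfolding simple_graph_def by (auto simp: card_2_iff)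

lemma no_loop: "{v, v} \<notin> E"
  using sg unfolding simple_graph_def by auto

lemma nbr_sub: "nbr E v \<subseteq> V"
  unfolding nbr_def using edge_sub by auto

lemma fin_nbr: "finite (nbr E v)"
  using nbr_sub finV finite_subset by blast

lemma nbr_not_self: "v \<notin> nbr E v"
  unfolding nbr_def using no_loop by auto

lemma nbr_sym: "u \<in> nbr E v \<longleftrightarrow> v \<in> nbr E u"
  unfolding nbr_def by (simp add: insert_commute)

lemma deg_nbr: "degree E v = card (nbr E v)"
  unfolding degree_def nbr_def by simp

lemma edges_at: "{e\<in>E. v \<in> e} = (\<lambda>u. {u, v}) ` nbr E v"
proof
  show "{e\<in>E. v \<in> e} \<subseteq> (\<lambda>u. {u, v}) ` nbr E v"
  proof
    fix e assume "e \<in> {e\<in>E. v \<in> e}"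
    then have e: "e \<in> E" "v \<in> e" by auto
    then obtain a b where ab: "e = {a, b}" "a \<noteq> b" using edge_form by blast
    show "e \<in> (\<lambda>u. {u, v}) ` nbr E v"
    proof (cases "v = a")
      case True
      then have "e = {b, v}" using ab by auto
      then show ?thesis using e unfolding nbr_def by auto
    next
      case False
      then have "v = b" using e ab by auto
      then have "e = {a, v}" using ab by auto
      then show ?thesis using e unfolding nbr_def by auto
    qed
  qed
next
  show "(\<lambda>u. {u, v}) ` nbr E v \<subseteq> {e\<in>E. v \<in> e}"
    unfolding nbr_def by auto
qed

lemma inj_edges: "inj_on (\<lambda>u. {u, v}) (nbr E v)"
  using nbr_not_self unfolding inj_on_def by (auto simp: doubleton_eq_iff)

lemma wdeg_nbr: "wdeg E f v = (\<Sum>u\<in>nbr E v. f {u, v})"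
  unfolding wdeg_def edges_at using sum.reindex[OF inj_edges] by (simp add: comp_def)

lemma wdeg_upd_v:
  assumes "u \<in> nbr E v" "e = {u, v}"
  shows "wdeg E (f(e := a)) v = base E f u v + a"
proof -
  have h1: "wdeg E (f(e := a)) v = (f(e := a)) {u, v} + (\<Sum>z\<in>nbr E v - {u}. (f(e := a)) {z, v})"
    unfolding wdeg_nbr using assms(1) fin_nbr sum.remove by metis
  have h2: "(\<Sum>z\<in>nbr E v - {u}. (f(e := a)) {z, v}) = base E f u v"
    unfolding base_def
  proof (rule sum.cong)
    fix z assume "z \<in> nbr E v - {u}"
    then have "z \<noteq> u" "z \<noteq> v" using nbr_not_self by auto
    then have "{z, v} \<noteq> e" using assms(2) by (auto simp: doubleton_eq_iff)
    then show "(f(e := a)) {z, v} = f {z, v}" by simp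
  qed simp
  have h3: "(f(e := a)) {u, v} = a" using assms(2) by simp
  show ?thesis by (simp only: h1 h2 h3 add.commute)
qed

lemma wdeg_upd_other:
  assumes "w \<notin> e"
  shows "wdeg E (f(e := a)) w = wdeg E f w"
  unfolding wdeg_def using assms by (intro sum.cong) auto

lemma base_upd_other:
  assumes "v \<notin> e"
  shows "base E (f(e := a)) u v = base E f u v"
  unfolding base_def using assms by (intro sum.cong) auto

lemma fin_forb: "finite (forb E M f D u v)"
proof -
  have "{z\<in>D. z \<in> nbr E v \<and> z \<notin> M} \<subseteq> nbr E v" by auto
  then show ?thesis unfolding forb_def using fin_nbr finite_subset by auto
qed

lemma card_forb_ins:
  assumes "u \<in> nbr E v" "u \<notin> D"
  shows "card (insert 0 (forb E M f D u v)) \<le> card (nbr E v)"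
proof (cases "v \<in> M")
  case True
  show ?thesis
  proof (cases "card (nbr E v) \<ge> 2")
    case True
    have "card (insert 0 (forb E M f D u v)) \<le> 2" using \<open>v \<in> M\<close> unfolding forb_def
      by (simp add: card_insert_if)
    then show ?thesis using True by linarith
  next
    case False
    have "card (nbr E v) \<ge> 1" using assms(1) fin_nbr by (metis One_nat_def Suc_leI card_gt_0_iff empty_iff)
    then have "card (nbr E v) = 1" using False by auto
    then have "nbr E v = {u}" using assms(1) by (metis card_1_singletonE singletonD)
    then have "base E f u v = 0" unfolding base_def by simp
    then show ?thesis using \<open>v \<in> M\<close> \<open>card (nbr E v) = 1\<close> unfolding forb_def by simp
  qed
next
  case False
  let ?S = "{z\<in>D. z \<in> nbr E v \<and> z \<notin> M}"
  have "?S \<subseteq> nbr E v - {u}" using assms by auto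
  then have "card ?S \<le> card (nbr E v) - 1" using fin_nbr assms(1)
    by (metis card_Diff_singleton card_mono finite_Diff)
  moreover have "card (forb E M f D u v) \<le> card ?S" using False unfolding forb_def
    by (simp add: card_image_le fin_nbr)
  moreover have "card (nbr E v) \<ge> 1" using assms(1) fin_nbr by (metis One_nat_def Suc_leI card_gt_0_iff empty_iff)
  moreover have "card (insert 0 (forb E M f D u v)) \<le> Suc (card (forb E M f D u v))"
    by (simp add: card_insert_if fin_forb)
  ultimately show ?thesis by linarith
qed

lemma card_forb:
  assumes "u \<in> nbr E v" "u \<notin> D" "card (nbr E v) \<ge> 2"
  shows "card (forb E M f D u v) \<le> card (nbr E v) - 1"
proof (cases "v \<in> M")
  case True
  then show ?thesis using assms(3) unfolding forb_def by simp
next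
  case False
  let ?S = "{z\<in>D. z \<in> nbr E v \<and> z \<notin> M}"
  have "?S \<subseteq> nbr E v - {u}" using assms by auto
  then have "card ?S \<le> card (nbr E v) - 1" using fin_nbr assms(1)
    by (metis card_Diff_singleton card_mono finite_Diff)
  moreover have "card (forb E M f D u v) \<le> card ?S" using False unfolding forb_def
    by (simp add: card_image_le fin_nbr)
  ultimately show ?thesis by linarith
qed

end



context sg begin

lemma step:
  fixes f :: "'a set \<Rightarrow> 'g::ab_group_add"
  assumes g: "good E M f D" and uD: "u \<notin> D" and vD: "v \<notin> D" and uv: "u \<in> nbr E v"
    and fZ: "finite Z" and kc: "ltc TYPE('g) (card Z + card (nbr E v))"
  shows "\<exists>a. a \<noteq> 0 \<and> a \<notin> Z \<and> good E M (f({u, v} := a)) (insert v D)"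
proof -
  let ?F = "forb E M f D u v"
  let ?S = "Z \<union> insert 0 ?F"
  have "card ?S \<le> card Z + card (insert 0 ?F)" by (rule card_Un_le)
  also have "\<dots> \<le> card Z + card (nbr E v)" using card_forb_ins[OF uv uD] by simp
  finally have "ltc TYPE('g) (card ?S)" using kc ltc_mono by blast
  moreover have "finite ?S" using fZ fin_forb by auto
  ultimately obtain a where a: "a \<notin> ?S" using ltc_avoid by blast
  let ?f = "f({u, v} := a)"
  have wv: "wdeg E ?f v = base E f u v + a" using wdeg_upd_v[OF uv refl] .
  have wz: "wdeg E ?f z = wdeg E f z" if "z \<in> D" for z
    using that uD vD by (intro wdeg_upd_other) auto
  have vnb: "{v, q} \<in> E \<Longrightarrow> q \<in> nbr E v" for q unfolding nbr_def by (simp add: insert_commute)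
  have "good E M ?f (insert v D)"
    unfolding good_def
  proof (intro conjI ballI allI impI)
    fix w assume "w \<in> insert v D" "w \<in> M"
    then show "wdeg E ?f w \<noteq> 0"
    proof (cases "w = v")
      case True
      then have "a \<noteq> - base E f u v" using a \<open>w \<in> M\<close> unfolding forb_def by auto
      then show ?thesis using wv True by (metis add.commute add_eq_0_iff)
    next
      case False
      then show ?thesis using \<open>w \<in> insert v D\<close> \<open>w \<in> M\<close> wz g unfolding good_def by auto
    qed
  next
    fix p q assume pq: "p \<in> insert v D \<and> q \<in> insert v D \<and> {p, q} \<in> E \<and> p \<notin> M \<and> q \<notin> M"
    have key: "wdeg E ?f v \<noteq> wdeg E ?f z" if "z \<in> D" "{v, z} \<in> E" "v \<notin> M" "z \<notin> M" for z
    proof -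
      have "wdeg E f z - base E f u v \<in> ?F" unfolding forb_def using that vnb by auto
      then have "a \<noteq> wdeg E f z - base E f u v" using a by auto
      then show ?thesis using wv wz[OF that(1)] by (metis add_diff_cancel_left')
    qed
    show "wdeg E ?f p \<noteq> wdeg E ?f q"
    proof (cases "p = v")
      case True
      then have "q \<noteq> v" using pq no_loop by auto
      then show ?thesis using key pq True by auto
    next
      case False
      show ?thesis
      proof (cases "q = v")
        case True
        then show ?thesis using key[of p] pq False by (metis insert_commute insertE)
      next
        case False
        then show ?thesis using \<open>p \<noteq> v\<close> pq wz g unfolding good_def by auto
      qed
    qed
  qed
  moreover have "a \<noteq> 0" "a \<notin> Z" using a by auto
  ultimately show ?thesis by blast
qed

lemma pair:
  fixes f :: "'a set \<Rightarrow> 'g::ab_group_add"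
  assumes g: "good E M f D" and rD: "r \<notin> D" and yD: "y \<notin> D" and ry: "r \<in> nbr E y"
    and d2: "card (nbr E r) \<ge> 2"
    and bneq: "base E f y r \<noteq> base E f r y"
    and kc: "ltc TYPE('g) (card (nbr E y) + card (nbr E r) - 1)"
  shows "\<exists>b. b \<noteq> 0 \<and> good E M (f({r, y} := b)) (insert r (insert y D))"
proof -
  have yr: "y \<in> nbr E r" using ry nbr_sym by blast
  have rny: "r \<noteq> y" using ry nbr_not_self by auto
  let ?F1 = "forb E M f D r y"
  let ?F2 = "forb E M f D y r"
  let ?S = "insert 0 ?F1 \<union> ?F2"
  have "card ?S \<le> card (insert 0 ?F1) + card ?F2" by (rule card_Un_le)
  also have "\<dots> \<le> card (nbr E y) + (card (nbr E r) - 1)"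
    using card_forb_ins[OF ry rD, where M=M and f=f] card_forb[OF yr yD d2, where M=M and f=f] by linarith
  finally have "ltc TYPE('g) (card ?S)" using kc ltc_mono d2 by (metis add_diff_assoc le_trans one_le_numeral)
  moreover have "finite ?S" using fin_forb by auto
  ultimately obtain b where b: "b \<notin> ?S" using ltc_avoid by blast
  let ?f = "f({r, y} := b)"
  have wy: "wdeg E ?f y = base E f r y + b" using wdeg_upd_v[OF ry refl] .
  have wr: "wdeg E ?f r = base E f y r + b" using wdeg_upd_v[OF yr, of "{r, y}"] by (simp add: insert_commute)
  have wz: "wdeg E ?f z = wdeg E f z" if "z \<in> D" for z
    using that rD yD by (intro wdeg_upd_other) auto
  have nb: "{v, q} \<in> E \<Longrightarrow> q \<in> nbr E v" for v q unfolding nbr_def by (simp add: insert_commute)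
  have keyy: "wdeg E ?f y \<noteq> wdeg E ?f z" if "z \<in> D" "{y, z} \<in> E" "y \<notin> M" "z \<notin> M" for z
  proof -
    have "wdeg E f z - base E f r y \<in> ?F1" unfolding forb_def using that nb by auto
    then have "b \<noteq> wdeg E f z - base E f r y" using b by auto
    then show ?thesis using wy wz[OF that(1)] by (metis add_diff_cancel_left')
  qed
  have keyr: "wdeg E ?f r \<noteq> wdeg E ?f z" if "z \<in> D" "{r, z} \<in> E" "r \<notin> M" "z \<notin> M" for z
  proof -
    have "wdeg E f z - base E f y r \<in> ?F2" unfolding forb_def using that nb by auto
    then have "b \<noteq> wdeg E f z - base E f y r" using b by auto
    then show ?thesis using wr wz[OF that(1)] by (metis add_diff_cancel_left')
  qed
  have ry_ne: "wdeg E ?f r \<noteq> wdeg E ?f y" using wr wy bneq by auto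
  have "good E M ?f (insert r (insert y D))"
    unfolding good_def
  proof (intro conjI ballI allI impI)
    fix w assume w: "w \<in> insert r (insert y D)" "w \<in> M"
    show "wdeg E ?f w \<noteq> 0"
    proof -
      { assume "w = y"
        then have "b \<noteq> - base E f r y" using b w unfolding forb_def by auto
        then have ?thesis using wy \<open>w = y\<close> by (metis add.commute add_eq_0_iff) }
      moreover
      { assume "w = r"
        then have "b \<noteq> - base E f y r" using b w unfolding forb_def by auto
        then have ?thesis using wr \<open>w = r\<close> by (metis add.commute add_eq_0_iff) }
      moreover
      { assume "w \<in> D"
        then have ?thesis using w wz g unfolding good_def by auto }
      ultimately show ?thesis using w by auto
    qed
  next
    fix p q assume pq: "p \<in> insert r (insert y D) \<and> q \<in> insert r (insert y D) \<and> {p, q} \<in> E \<and> p \<notin> M \<and> q \<notin> M"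
    then have pnq: "p \<noteq> q" using no_loop by auto
    have c: "{q, p} \<in> E" using pq by (simp add: insert_commute)
    show "wdeg E ?f p \<noteq> wdeg E ?f q"
    proof -
      { assume "p \<in> D" "q \<in> D" then have ?thesis using pq wz g unfolding good_def by auto }
      moreover { assume "p = r" "q = y" then have ?thesis using ry_ne by simp }
      moreover { assume "p = y" "q = r" then have ?thesis using ry_ne by simp }
      moreover { assume "p = r" "q \<in> D" then have ?thesis using keyr pq by auto }
      moreover { assume "p = y" "q \<in> D" then have ?thesis using keyy pq by auto }
      moreover { assume "q = r" "p \<in> D" then have ?thesis using keyr[of p] pq c by auto }
      moreover { assume "q = y" "p \<in> D" then have ?thesis using keyy[of p] pq c by auto }
      ultimately show ?thesis using pq pnq by blast
    qed
  qed
  moreover have "b \<noteq> 0" using b by auto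
  ultimately show ?thesis by blast
qed

end



context sg begin

lemma phase1:
  fixes \<rho> :: "'a \<Rightarrow> nat" and f :: "'a set \<Rightarrow> 'g::ab_group_add"
  assumes KV: "K \<subseteq> V" and TK: "T \<subseteq> K"
    and par: "\<forall>v\<in>K-T. \<exists>u\<in>K. u \<in> nbr E v \<and> \<rho> u < \<rho> v"
    and degk: "\<forall>v\<in>K. ltc TYPE('g) (card (nbr E v))"
  shows "T \<subseteq> U \<Longrightarrow> U \<subseteq> K \<Longrightarrow> (\<forall>v\<in>U-T. \<forall>w\<in>K. \<rho> w < \<rho> v \<longrightarrow> w \<in> U)
    \<Longrightarrow> good E M f (K-U) \<Longrightarrow> (\<forall>e\<in>E. f e \<noteq> 0)
    \<Longrightarrow> \<exists>f'::'a set \<Rightarrow> 'g. (\<forall>e\<in>E. f' e \<noteq> 0) \<and> good E M f' (K-T)"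
proof (induction "card (U - T)" arbitrary: U f rule: less_induct)
  case less
  show ?case
  proof (cases "U = T")
    case True then show ?thesis using less.prems(4,5) by blast
  next
    case False
    then have ne: "U - T \<noteq> {}" using less.prems(1) by auto
    have "U \<subseteq> V" using KV less.prems(2) by (rule order_trans[rotated])
    then have finU: "finite (U - T)" using finV finite_subset finite_Diff by metis
    define m where "m = Max (\<rho> ` (U - T))"
    have "m \<in> \<rho> ` (U - T)" unfolding m_def using ne finU by simp
    then obtain v where v: "v \<in> U - T" "\<rho> v = m" by auto
    have vmax: "\<forall>w\<in>U-T. \<rho> w \<le> \<rho> v"
    proof
      fix w assume "w \<in> U - T"
      then have "\<rho> w \<le> m" unfolding m_def using finU by (intro Max_ge) auto
      then show "\<rho> w \<le> \<rho> v" using v(2) by simp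
    qed
    have vK: "v \<in> K - T" using v less.prems(2) by auto
    then obtain u where u: "u \<in> K" "u \<in> nbr E v" "\<rho> u < \<rho> v" using par by blast
    have uU: "u \<in> U" using less.prems(3) v(1) u(1,3) by blast
    have uD: "u \<notin> K - U" using uU by blast
    have vD: "v \<notin> K - U" using v(1) by blast
    have kc: "ltc TYPE('g) (card ({}::'g set) + card (nbr E v))" using degk vK by simp
    have "\<exists>a. a \<noteq> 0 \<and> a \<notin> {} \<and> good E M (f({u, v} := a)) (insert v (K - U))"
      by (rule step[OF less.prems(4) uD vD u(2) finite.emptyI kc])
    then obtain a where a: "a \<noteq> 0" "good E M (f({u, v} := a)) (insert v (K - U))" by blast
    let ?U = "U - {v}"
    have eq: "insert v (K - U) = K - ?U" using vK less.prems(2) by auto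
    have "?U - T = (U - T) - {v}" by auto
    then have c1: "card (?U - T) < card (U - T)" using v finU card_Diff1_less by metis
    have c2: "T \<subseteq> ?U" using less.prems(1) v by auto
    have c3: "?U \<subseteq> K" using less.prems(2) by auto
    have c4: "\<forall>x\<in>?U-T. \<forall>w\<in>K. \<rho> w < \<rho> x \<longrightarrow> w \<in> ?U"
    proof (intro ballI impI)
      fix x w assume x: "x \<in> ?U - T" and w: "w \<in> K" "\<rho> w < \<rho> x"
      then have "w \<in> U" using less.prems(3) x by blast
      moreover have "\<rho> x \<le> \<rho> v" using vmax x by auto
      ultimately show "w \<in> ?U" using w by auto
    qed
    have c5: "good E M (f({u, v} := a)) (K - ?U)" using a eq by simp
    have c6: "\<forall>e\<in>E. (f({u, v} := a)) e \<noteq> 0" using a less.prems(5) by auto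
    show ?thesis by (rule less.hyps[OF c1 c2 c3 c4 c5 c6])
  qed
qed

end


context sg begin
definition R :: "('a \<times> 'a) set" where
  "R = {(x, y). x \<in> V \<and> y \<in> V \<and> adj E x y}"

lemma comp_R: "component V E v = {u\<in>V. (v, u) \<in> R\<^sup>*}"
  unfolding component_def R_def by simp

lemma R_nbr: "(x, y) \<in> R \<longleftrightarrow> x \<in> V \<and> y \<in> V \<and> y \<in> nbr E x"
  unfolding R_def adj_def nbr_def by (auto simp: insert_commute)

lemma R_sym: "sym R"
  unfolding sym_def R_nbr using nbr_sym by blast

lemma comp_mem: "v \<in> V \<Longrightarrow> v \<in> component V E v"
  unfolding comp_R by simp

lemma comp_sub: "component V E v \<subseteq> V"
  unfolding comp_R by auto

lemma comp_eq:
  assumes "y \<in> component V E v"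
  shows "component V E y = component V E v"
proof -
  have vy: "(v, y) \<in> R\<^sup>*" using assms unfolding comp_R by auto
  then have yv: "(y, v) \<in> R\<^sup>*" using R_sym by (meson sym_rtrancl symD)
  show ?thesis unfolding comp_R using vy yv
    by (auto intro: rtrancl_trans)
qed

lemma comp_edge:
  assumes "z \<in> component V E v" "w \<in> nbr E z"
  shows "w \<in> component V E v"
proof -
  have "w \<in> V" using assms(2) nbr_sub by auto
  moreover have "z \<in> V" using assms(1) comp_sub by auto
  ultimately have "(z, w) \<in> R" using R_nbr assms(2) by auto
  then show ?thesis using assms(1) \<open>w \<in> V\<close> unfolding comp_R by (auto intro: rtrancl_into_rtrancl)
qed

lemma comp_closed:
  assumes "v \<in> S" "\<forall>a\<in>S. \<forall>b\<in>nbr E a. b \<in> S"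
  shows "component V E v \<subseteq> S"
proof
  fix u assume "u \<in> component V E v"
  then have "(v, u) \<in> R\<^sup>*" unfolding comp_R by auto
  then show "u \<in> S"
  proof (induction rule: rtrancl_induct)
    case base then show ?case using assms by simp
  next
    case (step y z) then show ?case using assms R_nbr by blast
  qed
qed

lemma dist_exists:
  assumes K: "K = component V E v0" and TK: "T \<subseteq> K" and Tne: "T \<noteq> {}"
  shows "\<exists>\<rho>::'a \<Rightarrow> nat. \<forall>v\<in>K-T. \<exists>u\<in>K. u \<in> nbr E v \<and> \<rho> u < \<rho> v"
proof -
  define \<rho> where "\<rho> v = (LEAST n. \<exists>t\<in>T. (v, t) \<in> R ^^ n)" for v
  obtain t0 where t0: "t0 \<in> T" using Tne by auto
  have "\<exists>u\<in>K. u \<in> nbr E v \<and> \<rho> u < \<rho> v" if v: "v \<in> K - T" for v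
  proof -
    have "(v0, v) \<in> R\<^sup>*" "(v0, t0) \<in> R\<^sup>*" using v t0 TK K unfolding comp_R by auto
    then have "(v, t0) \<in> R\<^sup>*" using R_sym by (meson rtrancl_trans sym_rtrancl symD)
    then obtain n where "(v, t0) \<in> R ^^ n" using rtrancl_power by blast
    then have ex: "\<exists>t\<in>T. (v, t) \<in> R ^^ n" using t0 by blast
    have "\<exists>t\<in>T. (v, t) \<in> R ^^ (\<rho> v)" unfolding \<rho>_def by (rule LeastI_ex) (use ex in blast)
    then obtain t where t: "t \<in> T" "(v, t) \<in> R ^^ (\<rho> v)" by blast
    have "\<rho> v \<noteq> 0"
    proof
      assume "\<rho> v = 0"
      then have "v = t" using t by simp
      then show False using t v by auto
    qed
    then obtain m where m: "\<rho> v = Suc m" using not0_implies_Suc by blast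
    then obtain w where w: "(v, w) \<in> R" "(w, t) \<in> R ^^ m" using t relpow_Suc_D2 by metis
    have "\<rho> w \<le> m" unfolding \<rho>_def by (rule Least_le) (use w t in blast)
    moreover have "w \<in> nbr E v" using w R_nbr by auto
    moreover have "w \<in> K" using comp_edge v K \<open>w \<in> nbr E v\<close> by auto
    ultimately show ?thesis using m by auto
  qed
  then show ?thesis by blast
qed

end



context sg begin

lemma deg_le_max: "v \<in> V \<Longrightarrow> card (nbr E v) \<le> max_degree V E"
  unfolding max_degree_def deg_nbr[symmetric] using finV by (intro Max_ge) auto

lemma col_prop:
  assumes "subgraph V' E' V E" "V' \<noteq> {}"
  shows "\<exists>y\<in>V'. degree E' y < col V E"
proof -
  let ?P = "\<lambda>k. \<forall>V' E'. subgraph V' E' V E \<and> V' \<noteq> {} \<longrightarrow> min_degree V' E' < k"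
  have "?P (max_degree V E + 1)"
  proof (intro allI impI)
    fix V' E' assume a: "subgraph V' E' V E \<and> V' \<noteq> {}"
    then have sub: "V' \<subseteq> V" "E' \<subseteq> E" unfolding subgraph_def by auto
    have finV': "finite V'" using sub(1) finV by (rule finite_subset)
    obtain v where v: "v \<in> V'" using a by auto
    have "min_degree V' E' \<le> degree E' v" unfolding min_degree_def using finV' v by (intro Min_le) auto
    also have "degree E' v \<le> degree E v" unfolding degree_def
      by (rule card_mono) (use fin_nbr[of v] sub in \<open>auto simp: nbr_def\<close>)
    also have "degree E v \<le> max_degree V E" using deg_le_max[of v] v sub by (simp add: deg_nbr subset_iff)
    finally show "min_degree V' E' < max_degree V E + 1" by simp
  qed
  then have "?P (col V E)" unfolding col_def by (rule LeastI)
  then have lt: "min_degree V' E' < col V E" using assms by blast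
  have "V' \<subseteq> V" using assms(1) unfolding subgraph_def by auto
  then have finV': "finite V'" using finV by (rule finite_subset)
  have "min_degree V' E' \<in> degree E' ` V'" unfolding min_degree_def using finV' assms(2) by (intro Min_in) auto
  then show ?thesis using lt by auto
qed

lemma card2_ex: "2 \<le> card A \<Longrightarrow> \<exists>x y. x \<in> A \<and> y \<in> A \<and> x \<noteq> y"
proof -
  assume c: "2 \<le> card A"
  then have fA: "finite A" by (metis card.infinite not_numeral_le_zero)
  have "A \<noteq> {}" using c by auto
  then obtain x where x: "x \<in> A" by auto
  have "card (A - {x}) = card A - 1" using x fA by simp
  then have "card (A - {x}) > 0" using c by linarith
  then have "A - {x} \<noteq> {}" by (simp add: card_gt_0_iff)
  then obtain y where "y \<in> A - {x}" by auto
  then show ?thesis using x by auto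
qed

end



context sg begin

lemma triple_exists:
  assumes v0: "v0 \<in> V" and K: "K = component V E v0" and K3: "card K \<ge> 3"
  shows "2 \<le> col V E \<and> (\<exists>x r y. x \<in> K \<and> r \<in> K \<and> y \<in> K \<and> x \<in> nbr E r \<and> y \<in> nbr E r \<and> x \<noteq> y
     \<and> card (nbr E y) + card (nbr E r) - 1 < max_degree V E + col V E - 1
     \<and> (card (nbr E x) + 1 < max_degree V E + col V E - 1 \<or> (nbr E y = {r} \<and> nbr E r = {x, y})))"
proof -
  let ?D = "max_degree V E"
  let ?c = "col V E"
  have KV: "K \<subseteq> V" using K comp_sub by simp
  have finK: "finite K" using KV finV by (rule finite_subset)
  have compK: "component V E z = K" if "z \<in> K" for z using comp_eq that K by simp
  have nbrK: "u \<in> K" if "z \<in> K" "u \<in> nbr E z" for z u using comp_edge that K by simp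
  have small: False if "z \<in> K" "\<forall>a\<in>S. \<forall>b\<in>nbr E a. b \<in> S" "z \<in> S" "card S < 3" "finite S" for z S
  proof -
    have "K \<subseteq> S" using comp_closed[OF that(3,2)] compK[OF that(1)] by simp
    then have "card K \<le> card S" using that(5) by (rule card_mono[rotated])
    then show False using K3 that(4) by linarith
  qed
  let ?EK = "{e\<in>E. e \<subseteq> K}"
  have "subgraph K ?EK V E" unfolding subgraph_def using KV by auto
  moreover have "K \<noteq> {}" using K3 by auto
  ultimately obtain y0 where y0: "y0 \<in> K" "degree ?EK y0 < ?c" using col_prop by blast
  have "{u. {u, y0} \<in> ?EK} = nbr E y0"
    using nbrK[OF y0(1)] y0(1) unfolding nbr_def by auto
  then have dy0: "card (nbr E y0) < ?c" using y0(2) unfolding degree_def by simp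
  have "nbr E y0 \<noteq> {}"
  proof
    assume "nbr E y0 = {}"
    then show False using small[of y0 "{y0}"] y0(1) by auto
  qed
  then obtain r0 where r0: "r0 \<in> nbr E y0" by auto
  have y0r0: "y0 \<in> nbr E r0" using r0 nbr_sym by blast
  have r0K: "r0 \<in> K" using nbrK y0(1) r0 by blast
  have "\<exists>a\<in>{y0, r0}. \<exists>b\<in>nbr E a. b \<notin> {y0, r0}"
  proof (rule ccontr)
    assume "\<not> ?thesis"
    then have "\<forall>a\<in>{y0, r0}. \<forall>b\<in>nbr E a. b \<in> {y0, r0}" by blast
    moreover have "card {y0, r0} < 3" by (simp add: card_insert_if)
    ultimately show False using small[of y0 "{y0, r0}"] y0(1) by auto
  qed
  then obtain a b where ab: "a \<in> {y0, r0}" "b \<in> nbr E a" "b \<notin> {y0, r0}" by blast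
  have fn: "finite (nbr E z)" for z by (rule fin_nbr)
  have "0 < card (nbr E y0)" using r0 fn[of y0] card_gt_0_iff by blast
  then have dpos: "1 \<le> card (nbr E y0)" by simp
  then have c2: "2 \<le> ?c" using dy0 by linarith
  have dmax: "card (nbr E z) \<le> ?D" if "z \<in> K" for z using deg_le_max that KV by blast
  have ex: "\<exists>x r y. x \<in> K \<and> r \<in> K \<and> y \<in> K \<and> x \<in> nbr E r \<and> y \<in> nbr E r \<and> x \<noteq> y
     \<and> card (nbr E y) + card (nbr E r) - 1 < ?D + ?c - 1
     \<and> (card (nbr E x) + 1 < ?D + ?c - 1 \<or> (nbr E y = {r} \<and> nbr E r = {x, y}))"
  proof (cases "3 \<le> ?c")
    case True
    have bK: "b \<in> K" using ab nbrK y0(1) r0K by blast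
    have db: "card (nbr E b) + 1 < ?D + ?c - 1" using dmax[OF bK] True by linarith
    have s: "card (nbr E y0) + card (nbr E r0) - 1 < ?D + ?c - 1"
      using dmax[OF r0K] dmax[OF y0(1)] dy0 dpos by linarith
    have s': "card (nbr E r0) + card (nbr E y0) - 1 < ?D + ?c - 1" using s by linarith
    show ?thesis
    proof (cases "a = r0")
      case True
      show ?thesis apply (rule exI[of _ b], rule exI[of _ r0], rule exI[of _ y0])
        using bK r0K y0(1) ab y0r0 s db True by blast
    next
      case False
      then have "a = y0" using ab by auto
      show ?thesis apply (rule exI[of _ b], rule exI[of _ y0], rule exI[of _ r0])
        using bK r0K y0(1) ab r0 s' db \<open>a = y0\<close> by blast
    qed
  next
    case False
    then have c2': "?c = 2" using c2 by linarith
    define V' where "V' = {v\<in>K. 2 \<le> card (nbr E v)}"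
    define E' where "E' = {e\<in>E. e \<subseteq> V'}"
    have aK: "a \<in> K" using ab y0(1) r0K by auto
    have "\<exists>w2. w2 \<in> nbr E a \<and> w2 \<noteq> b"
    proof (cases "a = y0")
      case True then show ?thesis using r0 ab by auto
    next
      case False then have "a = r0" using ab by auto
      then show ?thesis using y0r0 ab by auto
    qed
    then obtain w2 where o: "w2 \<in> nbr E a" "w2 \<noteq> b" by blast
    have "card {w2, b} \<le> card (nbr E a)" using o ab fn by (intro card_mono) auto
    then have "2 \<le> card (nbr E a)" using o by simp
    then have "a \<in> V'" unfolding V'_def using aK by simp
    then have V'ne: "V' \<noteq> {}" by auto
    have "subgraph V' E' V E" unfolding subgraph_def V'_def E'_def using KV by auto
    then obtain r where r: "r \<in> V'" "degree E' r < ?c" using col_prop V'ne by blast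
    have rK: "r \<in> K" and dr2: "2 \<le> card (nbr E r)" using r(1) unfolding V'_def by auto
    have "{u. {u, r} \<in> E'} = {u\<in>nbr E r. u \<in> V'}" using r(1) unfolding E'_def nbr_def by auto
    then have dr': "card {u\<in>nbr E r. u \<in> V'} \<le> 1" using r(2) c2' unfolding degree_def by simp
    define L where "L = {z\<in>nbr E r. card (nbr E z) = 1}"
    have "nbr E r - L \<subseteq> {u\<in>nbr E r. u \<in> V'}"
    proof
      fix z assume z: "z \<in> nbr E r - L"
      then have "r \<in> nbr E z" using nbr_sym by blast
      then have "0 < card (nbr E z)" using fn[of z] card_gt_0_iff by blast
      then have "1 \<le> card (nbr E z)" by simp
      moreover have "card (nbr E z) \<noteq> 1" using z unfolding L_def by auto
      moreover have "z \<in> K" using nbrK rK z by blast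
      ultimately show "z \<in> {u\<in>nbr E r. u \<in> V'}" using z unfolding V'_def by auto
    qed
    then have "card (nbr E r - L) \<le> card {u\<in>nbr E r. u \<in> V'}" by (rule card_mono[rotated]) (use fn[of r] in simp)
    then have "card (nbr E r - L) \<le> 1" using dr' by linarith
    moreover have "card (nbr E r) \<le> card L + card (nbr E r - L)"
    proof -
      have "nbr E r = L \<union> (nbr E r - L)" unfolding L_def by auto
      then have "card (nbr E r) = card (L \<union> (nbr E r - L))" by simp
      also have "\<dots> \<le> card L + card (nbr E r - L)" by (rule card_Un_le)
      finally show ?thesis .
    qed
    ultimately have cL: "card (nbr E r) \<le> card L + 1" by linarith
    have Lsub: "L \<subseteq> nbr E r" unfolding L_def by auto
    have rD: "card (nbr E r) \<le> ?D" using dmax rK by blast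
    show ?thesis
    proof (cases "card (nbr E r) = 2")
      case True
      then have "card L \<ge> 1" using cL by linarith
      then have "L \<noteq> {}" by auto
      then obtain y where y: "y \<in> L" by auto
      have yr: "y \<in> nbr E r" and dy: "card (nbr E y) = 1" using y unfolding L_def by auto
      have "card (nbr E r - {y}) = 1" using True yr fn[of r] by simp
      then obtain x where x: "nbr E r - {y} = {x}" using card_1_singletonE by blast
      have xr: "x \<in> nbr E r" "x \<noteq> y" using x by auto
      have nr: "nbr E r = {x, y}" using x yr by auto
      have "r \<in> nbr E y" using yr nbr_sym by blast
      moreover obtain z where "nbr E y = {z}" using dy card_1_singletonE by blast
      ultimately have ny: "nbr E y = {r}" by simp
      have xK: "x \<in> K" and yK: "y \<in> K" using nbrK rK xr yr by auto
      have ss: "card (nbr E y) + card (nbr E r) - 1 < ?D + ?c - 1" using dy True rD c2' by linarith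
      show ?thesis apply (rule exI[of _ x], rule exI[of _ r], rule exI[of _ y])
        using xK yK rK xr yr ny nr ss by blast
    next
      case False
      then have "card L \<ge> 2" using cL dr2 by linarith
      then obtain x y where xy: "x \<in> L" "y \<in> L" "x \<noteq> y" using card2_ex by blast
      have xr: "x \<in> nbr E r" and dx: "card (nbr E x) = 1" using xy unfolding L_def by auto
      have yr: "y \<in> nbr E r" and dy: "card (nbr E y) = 1" using xy unfolding L_def by auto
      have xK: "x \<in> K" and yK: "y \<in> K" using nbrK rK xr yr by auto
      have "3 \<le> ?D" using False dr2 rD by linarith
      then have s1: "card (nbr E x) + 1 < ?D + ?c - 1" using dx c2' by linarith
      have s2: "card (nbr E y) + card (nbr E r) - 1 < ?D + ?c - 1" using dy rD c2' by linarith
      show ?thesis apply (rule exI[of _ x], rule exI[of _ r], rule exI[of _ y])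
        using xK yK rK xr yr xy(3) s1 s2 by blast
    qed
  qed
  show ?thesis using ex c2 by blast
qed

end



context sg begin

lemma comp_main:
  fixes M :: "'a set"
  assumes v0: "v0 \<in> V" and K: "K = component V E v0" and K3: "card K \<ge> 3"
    and kc: "\<not> finite (UNIV :: 'g::ab_group_add set) \<or> max_degree V E + col V E - 1 \<le> card (UNIV :: 'g set)"
  shows "\<exists>f :: 'a set \<Rightarrow> 'g. (\<forall>e\<in>E. f e \<noteq> 0) \<and> good E M f K"
proof -
  let ?N = "max_degree V E + col V E - 1"
  have lt: "ltc TYPE('g) n" if "n < ?N" for n using kc that unfolding ltc_def by auto
  note tr = triple_exists[OF v0 K K3]
  have c2: "2 \<le> col V E" using tr by (rule conjunct1)
  obtain x r y where xK: "x \<in> K" and rK: "r \<in> K" and yK: "y \<in> K"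
    and xr: "x \<in> nbr E r" and yr: "y \<in> nbr E r" and xy: "x \<noteq> y"
    and s: "card (nbr E y) + card (nbr E r) - 1 < ?N"
    and sx: "card (nbr E x) + 1 < ?N \<or> (nbr E y = {r} \<and> nbr E r = {x, y})"
    using conjunct2[OF tr] by (elim exE conjE)
  have KV: "K \<subseteq> V" using K comp_sub by simp
  have rx: "r \<in> nbr E x" using xr nbr_sym by blast
  have ry: "r \<in> nbr E y" using yr nbr_sym by blast
  have xnr: "x \<noteq> r" using xr nbr_not_self by blast
  have ynr: "y \<noteq> r" using yr nbr_not_self by blast
  have dmax: "card (nbr E z) \<le> max_degree V E" if "z \<in> K" for z using deg_le_max that KV by blast
  have degk: "\<forall>v\<in>K. ltc TYPE('g) (card (nbr E v))"
  proof
    fix v assume "v \<in> K"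
    then have "card (nbr E v) \<le> max_degree V E" by (rule dmax)
    then have "card (nbr E v) < ?N" using c2 by linarith
    then show "ltc TYPE('g) (card (nbr E v))" by (rule lt)
  qed
  have d2: "2 \<le> card (nbr E r)"
  proof -
    have "card {x, y} \<le> card (nbr E r)" using xr yr fin_nbr by (intro card_mono) auto
    then show ?thesis using xy by simp
  qed
  let ?T = "{x, r, y}"
  have TK: "?T \<subseteq> K" using xK rK yK by auto
  obtain \<rho> :: "'a \<Rightarrow> nat" where par: "\<forall>v\<in>K-?T. \<exists>u\<in>K. u \<in> nbr E v \<and> \<rho> u < \<rho> v"
    using dist_exists[OF K TK] by blast
  have "card {0::'g} < ?N" using d2 dmax[OF rK] c2 by simp
  then have "ltc TYPE('g) (card {0::'g})" by (rule lt)
  then obtain g0 :: 'g where g0: "g0 \<notin> {0}" using ltc_avoid by blast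
  let ?f0 = "\<lambda>_::'a set. g0"
  have g00: "good E M ?f0 (K - K)" unfolding good_def by simp
  have nz0: "\<forall>e\<in>E. ?f0 e \<noteq> 0" using g0 by simp
  have cl: "\<forall>v\<in>K-?T. \<forall>w\<in>K. \<rho> w < \<rho> v \<longrightarrow> w \<in> K" by blast
  obtain f1 :: "'a set \<Rightarrow> 'g" where nz1: "\<forall>e\<in>E. f1 e \<noteq> 0" and g1: "good E M f1 (K - ?T)"
    using phase1[OF KV TK par degk TK order_refl cl g00 nz0] by blast
  let ?D = "K - ?T"
  define B where "B = base E f1 r y"
  define C0 where "C0 = (\<Sum>z\<in>nbr E r - {y} - {x}. f1 {z, r})"
  define Z where "Z = {B - C0} - {0}"
  have finZ: "finite Z" unfolding Z_def by simp
  have kZ: "ltc TYPE('g) (card Z + card (nbr E x))"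
  proof (cases "card (nbr E x) + 1 < ?N")
    case True
    have "Z \<subseteq> {B - C0}" unfolding Z_def by auto
    then have "card Z \<le> card {B - C0}" by (rule card_mono[rotated]) simp
    then have "card Z \<le> 1" by simp
    then show ?thesis using True lt by simp
  next
    case False
    then have ny: "nbr E y = {r}" and nr: "nbr E r = {x, y}" using sx by auto
    have "B = 0" unfolding B_def base_def ny by simp
    moreover have e0: "nbr E r - {y} - {x} = {}" using nr by auto
    have "C0 = 0" unfolding C0_def e0 by simp
    ultimately have "Z = {}" using \<open>C0 = 0\<close> unfolding Z_def by simp
    then show ?thesis using degk xK by simp
  qed
  have rD: "r \<notin> ?D" and xD: "x \<notin> ?D" by auto
  obtain a where a0: "a \<noteq> 0" and aZ: "a \<notin> Z" and g2: "good E M (f1({r, x} := a)) (insert x ?D)"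
    using step[OF g1 rD xD rx finZ kZ] by blast
  let ?f2 = "f1({r, x} := a)"
  have bB: "base E ?f2 r y = B" unfolding B_def using xnr xy ynr by (intro base_upd_other) auto
  have bC: "base E ?f2 y r = a + C0"
  proof -
    have xin: "x \<in> nbr E r - {y}" using xr xy by auto
    have "base E ?f2 y r = ?f2 {x, r} + (\<Sum>z\<in>nbr E r - {y} - {x}. ?f2 {z, r})"
      unfolding base_def by (rule sum.remove[OF finite_Diff[OF fin_nbr] xin])
    also have "?f2 {x, r} = a" by (simp add: insert_commute)
    also have "(\<Sum>z\<in>nbr E r - {y} - {x}. ?f2 {z, r}) = C0" unfolding C0_def
    proof (rule sum.cong)
      fix z assume "z \<in> nbr E r - {y} - {x}"
      then have "z \<noteq> x" "z \<noteq> r" using nbr_not_self by auto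
      then have "{z, r} \<noteq> {r, x}" by (auto simp: doubleton_eq_iff)
      then show "?f2 {z, r} = f1 {z, r}" by simp
    qed simp
    finally show ?thesis .
  qed
  have bneq: "base E ?f2 y r \<noteq> base E ?f2 r y"
  proof
    assume "base E ?f2 y r = base E ?f2 r y"
    then have "a = B - C0" using bB bC by (simp add: eq_diff_eq)
    then show False using a0 aZ unfolding Z_def by auto
  qed
  have rD': "r \<notin> insert x ?D" and yD': "y \<notin> insert x ?D" using xnr xy by auto
  have kc': "ltc TYPE('g) (card (nbr E y) + card (nbr E r) - 1)" using s by (rule lt)
  obtain b where b0: "b \<noteq> 0" and g3: "good E M (?f2({r, y} := b)) (insert r (insert y (insert x ?D)))"
    using pair[OF g2 rD' yD' ry d2 bneq kc'] by blast
  have "insert r (insert y (insert x ?D)) = K" using TK by auto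
  then have "good E M (?f2({r, y} := b)) K" using g3 by simp
  moreover have "\<forall>e\<in>E. (?f2({r, y} := b)) e \<noteq> 0" using nz1 a0 b0 by simp
  ultimately show ?thesis by blast
qed

end



theorem theorem4:
  fixes V :: "'a set" and E :: "'a set set" and M :: "'a set"
  assumes "simple_graph V E"
    and "card V \<ge> 3"
    and "\<forall>v\<in>V. card (component V E v) \<ge> 3"
    and "M \<subseteq> V"
    and "\<not> finite (UNIV :: 'g::ab_group_add set) \<or>
         max_degree V E + col V E - 1 \<le> card (UNIV :: 'g set)"
  shows "\<exists>f :: 'a set \<Rightarrow> 'g. (\<forall>e\<in>E. f e \<noteq> 0)
           \<and> (\<forall>v\<in>M. wdeg E f v \<noteq> 0)
           \<and> (\<forall>u v. {u, v} \<in> E \<and> u \<notin> M \<and> v \<notin> M \<longrightarrow> wdeg E f u \<noteq> wdeg E f v)"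
proof -
  interpret sg V E using assms(1) by unfold_locales
  have ex: "\<forall>v\<in>V. \<exists>f :: 'a set \<Rightarrow> 'g. (\<forall>e\<in>E. f e \<noteq> 0) \<and> good E M f (component V E v)"
  proof
    fix v assume v: "v \<in> V"
    show "\<exists>f :: 'a set \<Rightarrow> 'g. (\<forall>e\<in>E. f e \<noteq> 0) \<and> good E M f (component V E v)"
    proof (rule comp_main[OF v refl _ assms(5)])
      show "3 \<le> card (component V E v)" using assms(3) v by blast
    qed
  qed
  obtain F :: "'a \<Rightarrow> 'a set \<Rightarrow> 'g" where
    F: "\<forall>v\<in>V. (\<forall>e\<in>E. F v e \<noteq> 0) \<and> good E M (F v) (component V E v)"
    using bchoice[OF ex] by (elim exE)
  define rep where "rep v = (SOME z. z \<in> V \<and> component V E z = component V E v)" for v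
  have rep: "rep v \<in> V \<and> component V E (rep v) = component V E v" if "v \<in> V" for v
    unfolding rep_def by (rule someI[of _ v]) (use that in simp)
  have rep_eq: "rep u = rep v" if "component V E u = component V E v" for u v
    unfolding rep_def using that by simp
  have adj_comp: "component V E u = component V E v" if "{u, v} \<in> E" for u v
  proof -
    have uV: "u \<in> V" using that edge_sub by auto
    have "v \<in> nbr E u" using that unfolding nbr_def by (simp add: insert_commute)
    then have "v \<in> component V E u" using comp_edge comp_mem[OF uV] by blast
    then show ?thesis using comp_eq by simp
  qed
  have Fgood: "good E M (F (rep v)) (component V E v)" and Fnz: "\<forall>e\<in>E. F (rep v) e \<noteq> 0" if v: "v \<in> V" for v
  proof -
    have r1: "rep v \<in> V" and r2: "component V E (rep v) = component V E v" using rep[OF v] by auto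
    have "(\<forall>e\<in>E. F (rep v) e \<noteq> 0) \<and> good E M (F (rep v)) (component V E (rep v))" using F r1 by (rule bspec)
    then show "good E M (F (rep v)) (component V E v)" "\<forall>e\<in>E. F (rep v) e \<noteq> 0" using r2 by auto
  qed
  define g where "g e = F (rep (SOME z. z \<in> e)) e" for e
  have g_at: "g e = F (rep w) e" if eE: "e \<in> E" and we: "w \<in> e" for e w
  proof -
    let ?s = "SOME z. z \<in> e"
    have s: "?s \<in> e" using that(2) by (rule someI)
    have "component V E ?s = component V E w"
    proof (cases "?s = w")
      case True then show ?thesis by simp
    next
      case False
      obtain p q where pq: "e = {p, q}" "p \<noteq> q" using edge_form[OF eE] by blast
      then have "e = {?s, w}" using s we False by auto
      then show ?thesis using adj_comp eE by simp
    qed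
    then show ?thesis unfolding g_def using rep_eq by metis
  qed
  have wg: "wdeg E g w = wdeg E (F (rep w)) w" for w
    unfolding wdeg_def by (rule sum.cong) (auto simp: g_at)
  have "\<forall>e\<in>E. g e \<noteq> 0"
  proof
    fix e assume e: "e \<in> E"
    then obtain p q where "e = {p, q}" using edge_form by blast
    then have p: "p \<in> e" by simp
    then have "p \<in> V" using e edge_sub by auto
    then show "g e \<noteq> 0" using g_at[OF e p] Fnz e by simp
  qed
  moreover have "\<forall>v\<in>M. wdeg E g v \<noteq> 0"
  proof
    fix v assume vM: "v \<in> M"
    then have v: "v \<in> V" using assms(4) by auto
    have "good E M (F (rep v)) (component V E v)" using Fgood[OF v] .
    moreover have "v \<in> component V E v" using comp_mem[OF v] .
    ultimately show "wdeg E g v \<noteq> 0" using wg vM unfolding good_def by simp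
  qed
  moreover have "\<forall>u v. {u, v} \<in> E \<and> u \<notin> M \<and> v \<notin> M \<longrightarrow> wdeg E g u \<noteq> wdeg E g v"
  proof (intro allI impI)
    fix u v assume h: "{u, v} \<in> E \<and> u \<notin> M \<and> v \<notin> M"
    have u: "u \<in> V" and v: "v \<in> V" using h edge_sub by auto
    have ce: "component V E u = component V E v" using adj_comp h by blast
    then have ruv: "rep u = rep v" by (rule rep_eq)
    have gd: "good E M (F (rep u)) (component V E u)" using Fgood[OF u] .
    have "u \<in> component V E u" using comp_mem[OF u] .
    moreover have "v \<in> component V E u" using comp_mem[OF v] ce by simp
    ultimately have "wdeg E (F (rep u)) u \<noteq> wdeg E (F (rep u)) v" using gd h unfolding good_def by blast
    then show "wdeg E g u \<noteq> wdeg E g v" using wg ruv by simp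
  qed
  ultimately show ?thesis by (intro exI[of _ g]) simp
qed


end
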